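(* Let $n\ge2$ and let $C\subset\mathbb{S}^{n-1}$ be a spherical code with $|C|=n+1$, and let $y_C:=\frac{1}{n+1}\sum_{y\in C}y$ be its centroid. Then there exists $x\in\mathbb{S}^{n-1}$ with $x\cdot y\in[-1,1/n]$ for all $y\in C$, and $$\min\{x\cdot y_C:\ x\in\mathbb{S}^{n-1},\ x\cdot y\in[-1,1/n]\ \text{for all } y\in C\}\le0.$$
   Context: $\mathbb{S}^{n-1}$ is the unit sphere in $\mathbb{R}^n$; a spherical code is a finite set of distinct points on it. *)

theory Defs
  imports "HOL-Analysis.Analysis"
begin

end

theory Submission
  imports Defs
begin

theorem lemma6p3:
  fixes C :: "(real ^ 'n) set"
  assumes n2: "CARD('n) \<ge> 2"
    and finC: "finite C"
    and onS: "C \<subseteq> sphere 0 1"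
    and cardC: "card C = CARD('n) + 1"
  defines "yC \<equiv> (1 / real (CARD('n) + 1)) *\<^sub>R (\<Sum>y\<in>C. y)"
    and "F \<equiv> {x \<in> sphere (0 :: real ^ 'n) 1.
                 \<forall>y\<in>C. x \<bullet> y \<in> {-1 .. 1 / real CARD('n)}}"
  shows "F \<noteq> {} \<and> (\<exists>x\<in>F. (\<forall>z\<in>F. x \<bullet> yC \<le> z \<bullet> yC) \<and> x \<bullet> yC \<le> 0)"
proof -
  define n where "n = CARD('n)"
  have n2': "n \<ge> 2" using n2 n_def by simp
  have lb: "\<And>x y. x \<in> sphere (0::real^'n) 1 \<Longrightarrow> y \<in> C \<Longrightarrow> -1 \<le> x \<bullet> y"
  proof -
    fix x y assume x: "x \<in> sphere (0::real^'n) 1" and y: "y \<in> C"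
    have "norm y = 1" using onS y by auto
    moreover have "norm x = 1" using x by auto
    ultimately have "\<bar>x \<bullet> y\<bar> \<le> 1" using Cauchy_Schwarz_ineq2[of x y] by simp
    thus "-1 \<le> x \<bullet> y" by linarith
  qed
  have key: "\<exists>x\<in>F. x \<bullet> (\<Sum>y\<in>C. y) \<le> 0"
  proof (cases "0 \<in> convex hull C")
    case False
    have "closed (convex hull C)" using finC by (simp add: compact_imp_closed finite_imp_compact_convex_hull)
    then obtain a b where ab: "a \<noteq> 0" "0 < b" "\<forall>x\<in>convex hull C. inner a x > b"
      using separating_hyperplane_closed_0[of "convex hull C"] False by auto
    define u where "u = - (1 / norm a) *\<^sub>R a"
    have u1: "u \<in> sphere 0 1" using ab(1) by (simp add: u_def)
    have uc: "u \<bullet> c \<le> 0" if "c \<in> C" for c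
    proof -
      have "a \<bullet> c > b" using ab(3) hull_inc[OF that, of convex] by blast
      hence "a \<bullet> c \<ge> 0" using ab(2) by linarith
      thus ?thesis by (simp add: u_def)
    qed
    have "u \<in> F" unfolding F_def
    proof (intro CollectI conjI ballI u1)
      fix c assume c: "c \<in> C"
      have "(0::real) \<le> 1 / real CARD('n)" by simp
      thus "u \<bullet> c \<in> {-1 .. 1 / real CARD('n)}" using order_trans[OF uc[OF c]] lb[OF u1 c]
        by simp
    qed
    moreover have "u \<bullet> (\<Sum>y\<in>C. y) \<le> 0" using uc by (simp add: inner_sum_right sum_nonpos)
    ultimately show ?thesis by blast
  next
    case True
    then obtain lam where lam: "\<forall>x\<in>C. 0 \<le> lam x" "sum lam C = 1" "(\<Sum>x\<in>C. lam x *\<^sub>R x) = 0"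
      using convex_hull_finite[OF finC] by auto
    have "\<exists>k\<in>C. lam k \<le> 1 / real (n+1)"
    proof (rule ccontr)
      assume "\<not> ?thesis"
      hence "\<forall>k\<in>C. 1 / real (n+1) < lam k" by auto
      have "(\<Sum>k\<in>C. 1 / real (n+1)) < sum lam C"
      proof (rule sum_strict_mono[OF finC, of "\<lambda>_. 1 / real (n+1)" lam])
        show "C \<noteq> {}" using cardC by auto
      qed (use \<open>\<forall>k\<in>C. 1 / real (n+1) < lam k\<close> in auto)
      thus False using lam(2) cardC n_def by simp
    qed
    then obtain k where k: "k \<in> C" "lam k \<le> 1 / real (n+1)" by blast
    have cardCk: "card (C - {k}) = n" using cardC k(1) finC n_def by simp
    have "C - {k} \<noteq> {}" using cardCk n2' by (metis card.empty not_numeral_le_zero)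
    then obtain c0 where c0: "c0 \<in> C - {k}" by blast
    define D where "D = (\<lambda>c. c - c0) ` (C - {k, c0})"
    have cardD: "card D \<le> n - 1"
    proof -
      have "card D \<le> card (C - {k, c0})" unfolding D_def by (rule card_image_le) (use finC in simp)
      also have "C - {k, c0} = (C - {k}) - {c0}" by auto
      also have "card \<dots> = n - 1" using cardCk c0 finC by (simp add: card_Diff_singleton)
      finally show ?thesis .
    qed
    have "dim D \<le> card D" by (rule dim_le_card) (simp_all add: span_superset D_def finC)
    hence "dim D < DIM(real^'n)" using cardD n2' n_def by simp
    then obtain x0 where x0: "x0 \<noteq> 0" "\<And>y. y \<in> span D \<Longrightarrow> orthogonal x0 y"
      using orthogonal_to_subspace_exists by blast
    define h0 where "h0 = x0 \<bullet> c0"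
    have x0c: "x0 \<bullet> c = h0" if "c \<in> C - {k}" for c
    proof (cases "c = c0")
      case True thus ?thesis by (simp add: h0_def)
    next
      case False
      hence "c - c0 \<in> D" using that by (auto simp: D_def)
      hence "orthogonal x0 (c - c0)" using x0(2) span_base by blast
      thus ?thesis by (simp add: orthogonal_def inner_diff_right h0_def)
    qed
    define x1 where "x1 = (1 / norm x0) *\<^sub>R x0"
    have x1c: "x1 \<bullet> c = h0 / norm x0" if "c \<in> C - {k}" for c
      using x0c[OF that] by (simp add: x1_def)
    have x1s: "x1 \<in> sphere 0 1" using x0(1) by (simp add: x1_def)
    define x where "x = (if x1 \<bullet> k \<le> 0 then x1 else - x1)"
    define h where "h = (if x1 \<bullet> k \<le> 0 then h0 / norm x0 else - (h0 / norm x0))"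
    define t where "t = x \<bullet> k"
    have xs: "x \<in> sphere 0 1" using x1s by (simp add: x_def)
    have xc: "x \<bullet> c = h" if "c \<in> C - {k}" for c
      using x1c[OF that] by (simp add: x_def h_def)
    have t0: "t \<le> 0" by (simp add: t_def x_def)
    have sumsplit: "(\<Sum>c\<in>C. f c) = f k + (\<Sum>c\<in>C - {k}. f c)" for f :: "real ^'n \<Rightarrow> real"
      using finC k(1) by (simp add: sum.remove)
    have "0 = x \<bullet> (\<Sum>c\<in>C. lam c *\<^sub>R c)" using lam(3) by simp
    also have "\<dots> = (\<Sum>c\<in>C. lam c * (x \<bullet> c))" by (simp add: inner_sum_right)
    also have "\<dots> = lam k * t + (\<Sum>c\<in>C - {k}. lam c * h)"
      using sumsplit xc t_def by simp
    also have "(\<Sum>c\<in>C - {k}. lam c * h) = (1 - lam k) * h"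
      using lam(2) sumsplit[of lam] by (simp add: sum_distrib_right[symmetric])
    finally have rel: "(1 - lam k) * h + lam k * t = 0" by simp
    have lk: "lam k * (real n + 1) \<le> 1" using k(2) by (simp add: field_simps)
    have lk0: "0 \<le> lam k" using lam(1) k(1) by auto
    have tge: "-1 \<le> t" using lb[OF xs k(1)] t_def by simp
    have "lam k * 3 \<le> lam k * (real n + 1)" using lk0 n2' by (intro mult_left_mono) auto
    hence pos: "1 - lam k > 0" using lk lk0 by linarith
    have hval: "h = - lam k * t / (1 - lam k)" using rel pos by (simp add: field_simps)
    have "lam k * t \<le> 0" using lk0 t0 by (simp add: mult_nonneg_nonpos)
    hence "lam k * t / (1 - lam k) \<le> 0" using pos by (simp add: divide_nonpos_pos)
    hence h0le: "h \<ge> 0" using hval by simp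
    have hle: "h \<le> 1 / real n"
    proof -
      have "h * (1 - lam k) = - lam k * t" using hval pos by simp
      also have "\<dots> \<le> lam k" using mult_left_mono[of "-t" 1 "lam k"] lk0 tge by simp
      finally have "h * (1 - lam k) \<le> lam k" .
      hence "h * (1 - lam k) * real n \<le> lam k * real n" by (simp add: mult_right_mono)
      also have "\<dots> \<le> 1 - lam k" using lk by (simp add: algebra_simps)
      finally have "(h * real n) * (1 - lam k) \<le> 1 * (1 - lam k)" by (simp add: algebra_simps)
      hence "h * real n \<le> 1" using pos by simp
      thus ?thesis using n2' by (simp add: field_simps)
    qed
    have "x \<in> F" unfolding F_def
    proof (intro CollectI conjI ballI xs)
      fix c assume c: "c \<in> C"
      show "x \<bullet> c \<in> {-1 .. 1 / real CARD('n)}"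
      proof (cases "c = k")
        case True
        have "(0::real) \<le> 1 / real CARD('n)" by simp
        thus ?thesis using True order_trans[OF t0] tge t_def by simp
      next
        case False thus ?thesis using xc[of c] c h0le hle n_def lb[OF xs c] by simp
      qed
    qed
    moreover have "x \<bullet> (\<Sum>y\<in>C. y) \<le> 0"
    proof -
      have "x \<bullet> (\<Sum>y\<in>C. y) = (\<Sum>c\<in>C. x \<bullet> c)" by (simp add: inner_sum_right)
      also have "\<dots> = t + (\<Sum>c\<in>C - {k}. h)" using sumsplit xc t_def by simp
      also have "\<dots> = t + real n * h" using cardCk by simp
      also have "\<dots> \<le> 0"
      proof -
        have "real n * h * (1 - lam k) = real n * (- lam k * t)" using hval pos by simp
        also have "\<dots> = (real n * lam k) * (- t)" by simp
        also have "\<dots> \<le> (1 - lam k) * (- t)" using lk t0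
          by (intro mult_right_mono) (simp_all add: algebra_simps)
        finally have "(real n * h + t) * (1 - lam k) \<le> 0" by (simp add: algebra_simps)
        thus ?thesis using pos by (simp add: mult_le_0_iff)
      qed
      finally show ?thesis .
    qed
    ultimately show ?thesis by blast
  qed
  then obtain x where x: "x \<in> F" "x \<bullet> (\<Sum>y\<in>C. y) \<le> 0" by blast
  have Fne: "F \<noteq> {}" using x by blast
  have "closed F"
  proof -
    have "F = sphere 0 1 \<inter> (\<Inter>y\<in>C. {z. -1 \<le> z \<bullet> y} \<inter> {z. z \<bullet> y \<le> 1 / real CARD('n)})"
      unfolding F_def by auto
    moreover have "closed (\<Inter>y\<in>C. {z::real^'n. -1 \<le> z \<bullet> y} \<inter> {z. z \<bullet> y \<le> 1 / real CARD('n)})"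
      by (intro closed_INT closed_Int ballI closed_Collect_le continuous_intros)
    ultimately show ?thesis by auto
  qed
  hence "compact F" unfolding F_def
    by (metis (no_types, lifting) F_def bounded_subset compact_eq_bounded_closed bounded_sphere mem_Collect_eq subsetI)
  then obtain m where m: "m \<in> F" "\<forall>z\<in>F. m \<bullet> yC \<le> z \<bullet> yC"
    using continuous_attains_inf[of F "\<lambda>z. z \<bullet> yC"] Fne continuous_on_inner[OF continuous_on_id continuous_on_const]
    by blast
  have "x \<bullet> yC \<le> 0" using x(2) by (simp add: yC_def divide_nonpos_pos add_pos_nonneg)
  hence "m \<bullet> yC \<le> 0" using m x(1) by (meson order_trans)
  thus ?thesis using Fne m by blast
qed

end
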